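(* Let $n\ge 3$. Let $c_{n,6}=-\min_{x\in[-1,1]}Q_{n,6}(x)$ and $b_{n,6}=1+Q_{n,6}(1)/c_{n,6}$. Then there is no finite subset $Y\subseteq\mathbb{S}^{n-1}$ which is a spherical design of harmonic index $6$ and has $|Y|=b_{n,6}$ (i.e. there is no tight spherical design of harmonic index $6$ on $\mathbb{S}^{n-1}$).
   Context: $\mathbb{S}^{n-1}$ is the unit sphere in $\mathbb{R}^n$. A finite $Y\subseteq\mathbb{S}^{n-1}$ is a spherical design of harmonic index $t$ if $\sum_{\mathbf{x}\in Y}f(\mathbf{x})=0$ for every real homogeneous harmonic polynomial $f$ in $n$ variables of degree exactly $t$. Every such $Y$ satisfies $|Y|\ge b_{n,t}:=1+Q_{n,t}(1)/c_{n,t}$ with $c_{n,t}=-\min_{[-1,1]}Q_{n,t}$; $Y$ is called tight if equality holds. Here $Q_{n,6}(x)=\frac{n(n+2)(n+10)}{6!}\{(n+4)(n+6)(n+8)x^6-15(n+4)(n+6)x^4+45(n+4)x^2-15\}$ is the Gegenbauer polynomial of degree 6, normalized so that $Q_{n,6}(1)$ equals the dimension of the space of homogeneous harmonic polynomials of degree 6 in $n$ variables. *)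

theory Defs
  imports Complex_Main
begin

text \<open>Points of R^n are represented as functions nat => real vanishing outside {..<n}.\<close>

definition sphere_pts :: "nat \<Rightarrow> (nat \<Rightarrow> real) set" where
  "sphere_pts n = {x. (\<forall>i\<ge>n. x i = 0) \<and> (\<Sum>i<n. (x i)^2) = 1}"

definition exps_of_degree :: "nat \<Rightarrow> nat \<Rightarrow> (nat \<Rightarrow> nat) set" where
  "exps_of_degree n t = {\<alpha>. (\<forall>i\<ge>n. \<alpha> i = 0) \<and> (\<Sum>i<n. \<alpha> i) = t}"

text \<open>A homogeneous polynomial of degree t in n variables is given by its coefficient
  function c on exps_of_degree n t; its evaluation at a point x:\<close>
definition hpoly_eval :: "nat \<Rightarrow> nat \<Rightarrow> ((nat \<Rightarrow> nat) \<Rightarrow> real) \<Rightarrow> (nat \<Rightarrow> real) \<Rightarrow> real" where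
  "hpoly_eval n t c x = (\<Sum>\<alpha>\<in>exps_of_degree n t. c \<alpha> * (\<Prod>i<n. x i ^ \<alpha> i))"

text \<open>Harmonic: the Laplacian vanishes, i.e. every coefficient of the Laplacian
  (a homogeneous polynomial of degree t-2) is zero. For t < 2 the Laplacian is 0.\<close>
definition harmonic_hpoly :: "nat \<Rightarrow> nat \<Rightarrow> ((nat \<Rightarrow> nat) \<Rightarrow> real) \<Rightarrow> bool" where
  "harmonic_hpoly n t c \<longleftrightarrow> (2 \<le> t \<longrightarrow>
     (\<forall>\<beta>\<in>exps_of_degree n (t - 2).
        (\<Sum>i<n. real ((\<beta> i + 2) * (\<beta> i + 1)) * c (\<beta>(i := \<beta> i + 2))) = 0))"

definition design_harmonic_index :: "nat \<Rightarrow> nat \<Rightarrow> (nat \<Rightarrow> real) set \<Rightarrow> bool" where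
  "design_harmonic_index n t Y \<longleftrightarrow> finite Y \<and> Y \<subseteq> sphere_pts n \<and>
     (\<forall>c. harmonic_hpoly n t c \<longrightarrow> (\<Sum>x\<in>Y. hpoly_eval n t c x) = 0)"

definition Q6 :: "nat \<Rightarrow> real \<Rightarrow> real" where
  "Q6 n x = real n * (real n + 2) * (real n + 10) / fact 6 *
     ((real n + 4) * (real n + 6) * (real n + 8) * x^6
      - 15 * (real n + 4) * (real n + 6) * x^4 + 45 * (real n + 4) * x^2 - 15)"

definition c6 :: "nat \<Rightarrow> real" where
  "c6 n = - Inf (Q6 n ` {-1..1})"

definition b6 :: "nat \<Rightarrow> real" where
  "b6 n = 1 + Q6 n 1 / c6 n"

end

theory Submission imports Defs "HOL-Library.FuncSet" "HOL-Library.Function_Algebras" "HOL-Analysis.Analysis" "HOL-Library.Z2" "HOL-Library.Numeral_Type" begin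


definition sh :: "nat \<Rightarrow> ((nat\<Rightarrow>nat)\<Rightarrow>real) \<Rightarrow> (nat\<Rightarrow>nat) \<Rightarrow> real" where
  "sh i c \<alpha> = (if 1 \<le> \<alpha> i then c (\<alpha>(i := \<alpha> i - 1)) else 0)"
definition pd :: "nat \<Rightarrow> ((nat\<Rightarrow>nat)\<Rightarrow>real) \<Rightarrow> (nat\<Rightarrow>nat) \<Rightarrow> real" where
  "pd i c \<beta> = real (\<beta> i + 1) * c (\<beta>(i := \<beta> i + 1))"

lemma pd_sh: "pd j (sh i c) = (\<lambda>\<beta>. sh i (pd j c) \<beta> + (if i = j then c \<beta> else 0))"
proof
  fix \<beta>
  show "pd j (sh i c) \<beta> = sh i (pd j c) \<beta> + (if i = j then c \<beta> else 0)"
  proof (cases "i = j")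
    case True
    then show ?thesis by (cases "\<beta> i") (auto simp: pd_def sh_def algebra_simps fun_upd_idem)
  next
    case False
    then show ?thesis by (auto simp: pd_def sh_def fun_upd_twist)
  qed
qed

lemma pd_add: "pd i (\<lambda>a. f a + g a) = (\<lambda>b. pd i f b + pd i g b)"
  by (auto simp: pd_def algebra_simps)
lemma pd_scale: "pd i (\<lambda>a. r * f a) = (\<lambda>b. r * pd i f b)"
  by (auto simp: pd_def algebra_simps)
lemma pd_sum: "pd i (\<lambda>a. \<Sum>k\<in>K. f k a) = (\<lambda>b. \<Sum>k\<in>K. pd i (f k) b)"
  by (auto simp: pd_def sum_distrib_left)
lemma pd_zero: "pd i (\<lambda>a. 0) = (\<lambda>b. 0)"
  by (auto simp: pd_def)
lemma sh_add: "sh i (\<lambda>a. f a + g a) = (\<lambda>b. sh i f b + sh i g b)"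
  by (auto simp: sh_def algebra_simps)
lemma sh_scale: "sh i (\<lambda>a. r * f a) = (\<lambda>b. r * sh i f b)"
  by (auto simp: sh_def algebra_simps)
lemma sh_sum: "sh i (\<lambda>a. \<Sum>k\<in>K. f k a) = (\<lambda>b. \<Sum>k\<in>K. sh i (f k) b)"
  by (auto simp: sh_def)
lemma sh_zero: "sh i (\<lambda>a. 0) = (\<lambda>b. 0)"
  by (auto simp: sh_def)

lemmas lin_simps = pd_add pd_scale pd_sum pd_zero sh_add sh_scale sh_sum sh_zero

definition ml :: "nat \<Rightarrow> (nat\<Rightarrow>real) \<Rightarrow> ((nat\<Rightarrow>nat)\<Rightarrow>real) \<Rightarrow> (nat\<Rightarrow>nat) \<Rightarrow> real" where
  "ml n y c = (\<lambda>a. \<Sum>i<n. y i * sh i c a)"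
definition ms :: "nat \<Rightarrow> ((nat\<Rightarrow>nat)\<Rightarrow>real) \<Rightarrow> (nat\<Rightarrow>nat) \<Rightarrow> real" where
  "ms n c = (\<lambda>a. \<Sum>i<n. sh i (sh i c) a)"
definition Lap :: "nat \<Rightarrow> ((nat\<Rightarrow>nat)\<Rightarrow>real) \<Rightarrow> (nat\<Rightarrow>nat) \<Rightarrow> real" where
  "Lap n c = (\<lambda>a. \<Sum>i<n. pd i (pd i c) a)"
definition Dy :: "nat \<Rightarrow> (nat\<Rightarrow>real) \<Rightarrow> ((nat\<Rightarrow>nat)\<Rightarrow>real) \<Rightarrow> (nat\<Rightarrow>nat) \<Rightarrow> real" where
  "Dy n y c = (\<lambda>a. \<Sum>i<n. y i * pd i c a)"
definition Eu :: "nat \<Rightarrow> ((nat\<Rightarrow>nat)\<Rightarrow>real) \<Rightarrow> (nat\<Rightarrow>nat) \<Rightarrow> real" where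
  "Eu n c = (\<lambda>a. \<Sum>i<n. sh i (pd i c) a)"
definition one :: "(nat\<Rightarrow>nat)\<Rightarrow>real" where
  "one = (\<lambda>a. if a = (\<lambda>_. 0) then 1 else 0)"


lemma pd_ml: "pd j (ml n y c) = (\<lambda>b. ml n y (pd j c) b + (if j < n then y j * c b else 0))"
proof -
  have "pd j (ml n y c) = (\<lambda>b. \<Sum>i<n. y i * (sh i (pd j c) b + (if i = j then c b else 0)))"
    unfolding ml_def by (simp add: lin_simps pd_sh)
  also have "\<dots> = (\<lambda>b. ml n y (pd j c) b + (if j < n then y j * c b else 0))"
  proof
    fix b
    have e: "\<And>i. y i * (sh i (pd j c) b + (if i = j then c b else 0)) = y i * sh i (pd j c) b + (if i = j then y j * c b else 0)"
      by (auto simp: distrib_left)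
    show "(\<Sum>i<n. y i * (sh i (pd j c) b + (if i = j then c b else 0))) = ml n y (pd j c) b + (if j < n then y j * c b else 0)"
      unfolding e sum.distrib by (simp add: ml_def sum.delta)
  qed
  finally show ?thesis .
qed

lemma ml_add: "ml n y (\<lambda>a. f a + g a) = (\<lambda>b. ml n y f b + ml n y g b)"
  by (simp add: ml_def lin_simps algebra_simps sum.distrib)
lemma ml_scale: "ml n y (\<lambda>a. r * f a) = (\<lambda>b. r * ml n y f b)"
  by (simp add: ml_def lin_simps algebra_simps sum_distrib_left)
lemma ml_sum: "ml n y (\<lambda>a. \<Sum>k\<in>K. f k a) = (\<lambda>b. \<Sum>k\<in>K. ml n y (f k) b)"
  by (simp add: ml_def lin_simps sum_distrib_left sum.swap[of _ K] algebra_simps)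

lemma Lap_ml: "Lap n (ml n y c) = (\<lambda>b. ml n y (Lap n c) b + 2 * Dy n y c b)"
proof -
  have "Lap n (ml n y c) = (\<lambda>b. \<Sum>j<n. (2 * (y j * pd j c b) + ml n y (pd j (pd j c)) b))"
    unfolding Lap_def by (simp add: pd_ml lin_simps ml_add ml_scale)
  also have "\<dots> = (\<lambda>b. ml n y (Lap n c) b + 2 * Dy n y c b)"
  proof
    fix b show "(\<Sum>j<n. (2 * (y j * pd j c b) + ml n y (pd j (pd j c)) b)) = ml n y (Lap n c) b + 2 * Dy n y c b"
      unfolding sum.distrib by (simp add: Lap_def Dy_def ml_sum sum_distrib_left)
  qed
  finally show ?thesis .
qed


lemma sh_sh: "sh j (sh i c) = sh i (sh j c)"
  by (rule ext) (auto simp: sh_def fun_upd_twist)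

lemma sh_ml: "sh j (ml n y c) = ml n y (sh j c)"
  unfolding ml_def by (simp add: lin_simps sh_sh)
lemma sh_ms: "sh j (ms n c) = ms n (sh j c)"
  unfolding ms_def by (simp add: lin_simps sh_sh)

lemma ms_add: "ms n (\<lambda>a. f a + g a) = (\<lambda>b. ms n f b + ms n g b)"
  by (simp add: ms_def lin_simps algebra_simps sum.distrib)
lemma ms_scale: "ms n (\<lambda>a. r * f a) = (\<lambda>b. r * ms n f b)"
  by (simp add: ms_def lin_simps algebra_simps sum_distrib_left)
lemma ms_sum: "ms n (\<lambda>a. \<Sum>k\<in>K. f k a) = (\<lambda>b. \<Sum>k\<in>K. ms n (f k) b)"
  by (simp add: ms_def lin_simps sum.swap[of _ K])
lemma ms_zero: "ms n (\<lambda>a. 0) = (\<lambda>b. 0)"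
  by (simp add: ms_def lin_simps)
lemma ml_zero: "ml n y (\<lambda>a. 0) = (\<lambda>b. 0)"
  by (simp add: ml_def lin_simps)

lemma pd_ms: "pd j (ms n c) = (\<lambda>b. ms n (pd j c) b + (if j < n then 2 * sh j c b else 0))"
proof
  fix b
  have e: "\<And>i. pd j (sh i (sh i c)) b = sh i (sh i (pd j c)) b + (if i = j then 2 * sh j c b else 0)"
    by (auto simp: pd_sh lin_simps)
  show "pd j (ms n c) b = ms n (pd j c) b + (if j < n then 2 * sh j c b else 0)"
    unfolding ms_def by (simp add: lin_simps e sum.distrib sum.delta)
qed

lemma Lap_ms: "Lap n (ms n c) = (\<lambda>b. ms n (Lap n c) b + 4 * Eu n c b + 2 * real n * c b)"
proof
  fix b
  have e: "\<And>j. j < n \<Longrightarrow> pd j (pd j (ms n c)) b = ms n (pd j (pd j c)) b + 4 * sh j (pd j c) b + 2 * c b"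
    by (simp add: pd_ms lin_simps pd_sh)
  have "Lap n (ms n c) b = (\<Sum>j<n. ms n (pd j (pd j c)) b + 4 * sh j (pd j c) b + 2 * c b)"
    unfolding Lap_def by (rule sum.cong) (simp_all add: e)
  also have "\<dots> = ms n (Lap n c) b + 4 * Eu n c b + 2 * real n * c b"
    by (simp add: sum.distrib Lap_def Eu_def ms_sum sum_distrib_left)
  finally show "Lap n (ms n c) b = ms n (Lap n c) b + 4 * Eu n c b + 2 * real n * c b" .
qed

lemma Dy_ml: "Dy n y (ml n y c) = (\<lambda>b. ml n y (Dy n y c) b + (\<Sum>i<n. y i ^ 2) * c b)"
proof
  fix b
  have "Dy n y (ml n y c) b = (\<Sum>j<n. y j * ml n y (pd j c) b + y j ^ 2 * c b)"
    unfolding Dy_def by (rule sum.cong) (simp_all add: pd_ml algebra_simps power2_eq_square)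
  also have "\<dots> = ml n y (Dy n y c) b + (\<Sum>i<n. y i ^ 2) * c b"
    by (simp add: sum.distrib Dy_def ml_sum ml_scale sum_distrib_left sum_distrib_right)
  finally show "Dy n y (ml n y c) b = ml n y (Dy n y c) b + (\<Sum>i<n. y i ^ 2) * c b" .
qed

lemma Dy_ms: "Dy n y (ms n c) = (\<lambda>b. ms n (Dy n y c) b + 2 * ml n y c b)"
proof
  fix b
  have "Dy n y (ms n c) b = (\<Sum>j<n. y j * ms n (pd j c) b + 2 * (y j * sh j c b))"
    unfolding Dy_def by (rule sum.cong) (simp_all add: pd_ms algebra_simps)
  also have "\<dots> = ms n (Dy n y c) b + 2 * ml n y c b"
    by (simp add: sum.distrib Dy_def ml_def ms_sum ms_scale sum_distrib_left)
  finally show "Dy n y (ms n c) b = ms n (Dy n y c) b + 2 * ml n y c b" .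
qed

lemma Eu_ml: "Eu n (ml n y c) = (\<lambda>b. ml n y (Eu n c) b + ml n y c b)"
proof
  fix b
  have "Eu n (ml n y c) b = (\<Sum>j<n. ml n y (sh j (pd j c)) b + y j * sh j c b)"
    unfolding Eu_def by (rule sum.cong) (simp_all add: pd_ml lin_simps sh_ml)
  also have "\<dots> = ml n y (Eu n c) b + ml n y c b"
    by (simp add: sum.distrib Eu_def ml_sum) (simp add: ml_def)
  finally show "Eu n (ml n y c) b = ml n y (Eu n c) b + ml n y c b" .
qed

lemma Eu_ms: "Eu n (ms n c) = (\<lambda>b. ms n (Eu n c) b + 2 * ms n c b)"
proof
  fix b
  have "Eu n (ms n c) b = (\<Sum>j<n. ms n (sh j (pd j c)) b + 2 * sh j (sh j c) b)"
    unfolding Eu_def by (rule sum.cong) (simp_all add: pd_ms lin_simps sh_ms)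
  also have "\<dots> = ms n (Eu n c) b + 2 * ms n c b"
    by (simp add: sum.distrib Eu_def ms_sum) (simp add: ms_def sum_distrib_left)
  finally show "Eu n (ms n c) b = ms n (Eu n c) b + 2 * ms n c b" .
qed

lemma pd_one: "pd i one = (\<lambda>b. 0)"
proof
  fix b :: "nat \<Rightarrow> nat"
  have "b(i := b i + 1) \<noteq> (\<lambda>_. 0)" by (metis add_is_0 fun_upd_same one_neq_zero)
  then show "pd i one b = 0" by (simp add: pd_def one_def)
qed
lemma Lap_one: "Lap n one = (\<lambda>b. 0)" by (simp add: Lap_def pd_one lin_simps)
lemma Dy_one: "Dy n y one = (\<lambda>b. 0)" by (simp add: Dy_def pd_one)
lemma Eu_one: "Eu n one = (\<lambda>b. 0)" by (simp add: Eu_def pd_one lin_simps)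


lemma Lap_add: "Lap n (\<lambda>a. f a + g a) = (\<lambda>b. Lap n f b + Lap n g b)"
  by (simp add: Lap_def lin_simps sum.distrib)
lemma Lap_scale: "Lap n (\<lambda>a. r * f a) = (\<lambda>b. r * Lap n f b)"
  by (simp add: Lap_def lin_simps sum_distrib_left)
lemma Eu_add: "Eu n (\<lambda>a. f a + g a) = (\<lambda>b. Eu n f b + Eu n g b)"
  by (simp add: Eu_def lin_simps sum.distrib)
lemma Eu_scale: "Eu n (\<lambda>a. r * f a) = (\<lambda>b. r * Eu n f b)"
  by (simp add: Eu_def lin_simps sum_distrib_left)
lemma Dy_add: "Dy n y (\<lambda>a. f a + g a) = (\<lambda>b. Dy n y f b + Dy n y g b)"
  by (simp add: Dy_def lin_simps sum.distrib algebra_simps)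
lemma Dy_scale: "Dy n y (\<lambda>a. r * f a) = (\<lambda>b. r * Dy n y f b)"
  by (simp add: Dy_def lin_simps sum_distrib_left algebra_simps)

definition Aseq :: "nat \<Rightarrow> (nat\<Rightarrow>real) \<Rightarrow> nat \<Rightarrow> (nat\<Rightarrow>nat) \<Rightarrow> real" where
  "Aseq n y m = (ml n y ^^ m) one"

lemma Aseq_0: "Aseq n y 0 = one" by (simp add: Aseq_def)
lemma Aseq_Suc: "Aseq n y (Suc m) = ml n y (Aseq n y m)" by (simp add: Aseq_def)

definition Zc :: "nat \<Rightarrow> (nat\<Rightarrow>real) \<Rightarrow> (nat\<Rightarrow>nat) \<Rightarrow> real" where
  "Zc n y = (\<lambda>b. (real n + 4) * (real n + 6) * (real n + 8) * Aseq n y 6 b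
          + (- 15 * (real n + 4) * (real n + 6)) * ms n (Aseq n y 4) b
          + 45 * (real n + 4) * ms n (ms n (Aseq n y 2)) b
          + (- 15) * ms n (ms n (ms n (Aseq n y 0))) b)"

context
  fixes n :: nat and y :: "nat \<Rightarrow> real"
  assumes ynorm: "(\<Sum>i<n. y i ^ 2) = 1"
begin

lemma Dy_Aseq: "Dy n y (Aseq n y (Suc m)) = (\<lambda>b. real (Suc m) * Aseq n y m b)"
proof (induction m)
  case 0
  then show ?case by (simp add: Aseq_Suc Aseq_0 Dy_ml Dy_one ml_zero ynorm)
next
  case (Suc m)
  show ?case
    by (subst Aseq_Suc, subst Dy_ml, subst Suc, simp only: ml_scale) (simp add: ynorm Aseq_Suc algebra_simps)
qed

lemma Eu_Aseq: "Eu n (Aseq n y m) = (\<lambda>b. real m * Aseq n y m b)"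
proof (induction m)
  case 0
  then show ?case by (simp add: Aseq_0 Eu_one)
next
  case (Suc m)
  show ?case
    by (subst Aseq_Suc, subst Eu_ml, subst Suc, simp only: ml_scale) (simp add: Aseq_Suc algebra_simps)
qed

lemma Lap_Aseq0: "Lap n (Aseq n y 0) = (\<lambda>b. 0)"
  by (simp add: Aseq_0 Lap_one)
lemma Lap_Aseq1: "Lap n (Aseq n y (Suc 0)) = (\<lambda>b. 0)"
  by (simp add: Aseq_Suc Aseq_0 Lap_ml Lap_one Dy_one ml_zero)

lemma Lap_Aseq: "Lap n (Aseq n y (Suc (Suc m))) = (\<lambda>b. real ((m+2)*(m+1)) * Aseq n y m b)"
proof (induction m)
  case 0
  show ?case
    by (subst Aseq_Suc, subst Lap_ml) (simp add: Lap_Aseq1 ml_zero Dy_Aseq[of 0, simplified])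
next
  case (Suc m)
  show ?case
    by (subst Aseq_Suc, subst Lap_ml, subst Suc, subst Dy_Aseq)
       (simp only: ml_scale, simp add: Aseq_Suc algebra_simps)
qed


lemma Lap4: "Lap n (Aseq n y 4) = (\<lambda>b. 12 * Aseq n y 2 b)"
  using Lap_Aseq[of 2] by (simp add: numeral_eq_Suc)
lemma Lap2: "Lap n (Aseq n y 2) = (\<lambda>b. 2 * Aseq n y 0 b)"
  using Lap_Aseq[of 0] by (simp add: numeral_eq_Suc)
lemma Lap6: "Lap n (Aseq n y 6) = (\<lambda>b. 30 * Aseq n y 4 b)"
  using Lap_Aseq[of 4] by (simp add: numeral_eq_Suc)

lemma LM4: "Lap n (ms n (Aseq n y 4)) = (\<lambda>b. 12 * ms n (Aseq n y 2) b + (2 * real n + 16) * Aseq n y 4 b)"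
  by (simp only: Lap_ms Lap4 Eu_Aseq ms_scale) (simp add: algebra_simps)
lemma LM2: "Lap n (ms n (Aseq n y 2)) = (\<lambda>b. 2 * ms n (Aseq n y 0) b + (2 * real n + 8) * Aseq n y 2 b)"
  by (simp only: Lap_ms Lap2 Eu_Aseq ms_scale) (simp add: algebra_simps)
lemma LM0: "Lap n (ms n (Aseq n y 0)) = (\<lambda>b. 2 * real n * Aseq n y 0 b)"
  by (simp only: Lap_ms Lap_Aseq0 Eu_Aseq ms_zero) (simp add: algebra_simps)
lemma EM2: "Eu n (ms n (Aseq n y 2)) = (\<lambda>b. 4 * ms n (Aseq n y 2) b)"
  by (simp only: Eu_ms Eu_Aseq ms_scale) (simp add: algebra_simps)
lemma EM0: "Eu n (ms n (Aseq n y 0)) = (\<lambda>b. 2 * ms n (Aseq n y 0) b)"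
  by (simp only: Eu_ms Eu_Aseq ms_scale) (simp add: algebra_simps)
lemma EMM0: "Eu n (ms n (ms n (Aseq n y 0))) = (\<lambda>b. 4 * ms n (ms n (Aseq n y 0)) b)"
  by (subst Eu_ms, subst EM0, simp only: ms_scale) (simp add: algebra_simps)
lemma LMM2: "Lap n (ms n (ms n (Aseq n y 2))) = (\<lambda>b. 2 * ms n (ms n (Aseq n y 0)) b + (4 * real n + 24) * ms n (Aseq n y 2) b)"
  by (subst Lap_ms, subst LM2, subst EM2, simp only: ms_scale ms_add) (simp add: algebra_simps)
lemma LMM0: "Lap n (ms n (ms n (Aseq n y 0))) = (\<lambda>b. (4 * real n + 8) * ms n (Aseq n y 0) b)"
  by (subst Lap_ms, subst LM0, subst EM0, simp only: ms_scale ms_add) (simp add: algebra_simps)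
lemma LMMM0: "Lap n (ms n (ms n (ms n (Aseq n y 0)))) = (\<lambda>b. (6 * real n + 24) * ms n (ms n (Aseq n y 0)) b)"
  by (subst Lap_ms, subst LMM0, subst EMM0, simp only: ms_scale ms_add) (simp add: algebra_simps)

lemma Lap_Zc: "Lap n (Zc n y) = (\<lambda>b. 0)"
  unfolding Zc_def
  by (simp only: Lap_add Lap_scale Lap6 LM4 LMM2 LMMM0) (simp add: algebra_simps)

end


lemma sum_upd_nat: "i < (n::nat) \<Longrightarrow> (\<Sum>j<n. (f(i := v)) j) + f i = (\<Sum>j<n. f j) + (v::nat)"
proof -
  assume i: "i < n"
  define g where "g = f(i := v)"
  have "(\<Sum>j<n. g j) = g i + (\<Sum>j\<in>{..<n}-{i}. g j)"
    using i sum.remove[of "{..<n}" i g] by simp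
  also have "(\<Sum>j\<in>{..<n}-{i}. g j) = (\<Sum>j\<in>{..<n}-{i}. f j)"
    by (rule sum.cong) (auto simp: g_def)
  finally have 1: "(\<Sum>j<n. g j) = v + (\<Sum>j\<in>{..<n}-{i}. f j)" by (simp add: g_def)
  have 2: "(\<Sum>j<n. f j) = f i + (\<Sum>j\<in>{..<n}-{i}. f j)"
    using i sum.remove[of "{..<n}" i f] by simp
  show ?thesis using 1 2 by (simp add: g_def)
qed

lemma prod_upd: "i < (n::nat) \<Longrightarrow> (\<Prod>j<n. (x j::real) ^ (f(i := v)) j) * x i ^ f i = (\<Prod>j<n. x j ^ f j) * x i ^ v"
proof -
  assume i: "i < n"
  define g where "g = (\<lambda>j. x j ^ (f(i := v)) j)"
  define h where "h = (\<lambda>j. x j ^ f j)"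
  have "(\<Prod>j<n. g j) = g i * (\<Prod>j\<in>{..<n}-{i}. g j)"
    using i prod.remove[of "{..<n}" i g] by simp
  also have "(\<Prod>j\<in>{..<n}-{i}. g j) = (\<Prod>j\<in>{..<n}-{i}. h j)"
    by (rule prod.cong) (auto simp: g_def h_def)
  finally have 1: "(\<Prod>j<n. g j) = x i ^ v * (\<Prod>j\<in>{..<n}-{i}. h j)" by (simp add: g_def)
  have 2: "(\<Prod>j<n. h j) = h i * (\<Prod>j\<in>{..<n}-{i}. h j)"
    using i prod.remove[of "{..<n}" i h] by simp
  show ?thesis using 1 2 by (simp add: g_def h_def)
qed

lemma finite_exps: "finite (exps_of_degree n t)"
proof -
  let ?h = "\<lambda>(f::nat\<Rightarrow>nat) i. if i < n then f i else 0"
  have "exps_of_degree n t \<subseteq> ?h ` ({..<n} \<rightarrow>\<^sub>E {0..t})"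
  proof
    fix a assume a: "a \<in> exps_of_degree n t"
    have le: "a i \<le> t" if "i < n" for i
    proof -
      have "a i \<le> (\<Sum>j<n. a j)" using that by (intro member_le_sum) auto
      then show ?thesis using a by (simp add: exps_of_degree_def)
    qed
    have "a = ?h (restrict a {..<n})"
      using a by (auto simp: exps_of_degree_def restrict_def fun_eq_iff)
    moreover have "restrict a {..<n} \<in> {..<n} \<rightarrow>\<^sub>E {0..t}" using le by auto
    ultimately show "a \<in> ?h ` ({..<n} \<rightarrow>\<^sub>E {0..t})" by blast
  qed
  moreover have "finite (?h ` ({..<n} \<rightarrow>\<^sub>E {0..t}))" by (intro finite_imageI finite_PiE) auto
  ultimately show ?thesis by (rule finite_subset)
qed

lemma eval_sh:
  assumes i: "i < n"
  shows "hpoly_eval n (Suc t) (sh i c) x = x i * hpoly_eval n t c x"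
proof -
  let ?T = "{a \<in> exps_of_degree n (Suc t). 1 \<le> a i}"
  let ?g = "\<lambda>b::nat\<Rightarrow>nat. b(i := b i + 1)"
  have "hpoly_eval n (Suc t) (sh i c) x = (\<Sum>a\<in>?T. sh i c a * (\<Prod>j<n. x j ^ a j))"
    unfolding hpoly_eval_def
    by (rule sum.mono_neutral_right) (auto simp: sh_def finite_exps)
  also have "\<dots> = (\<Sum>b\<in>exps_of_degree n t. sh i c (?g b) * (\<Prod>j<n. x j ^ ?g b j))"
  proof (rule sum.reindex_bij_betw[symmetric])
    show "bij_betw ?g (exps_of_degree n t) ?T"
    proof (rule bij_betw_byWitness[where f' = "\<lambda>a. a(i := a i - 1)"])
      show "\<forall>a\<in>exps_of_degree n t. (?g a)(i := ?g a i - 1) = a" by auto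
      show "\<forall>a\<in>?T. ?g (a(i := a i - 1)) = a" by auto
      show "?g ` exps_of_degree n t \<subseteq> ?T"
      proof
        fix a assume "a \<in> ?g ` exps_of_degree n t"
        then obtain b where b: "b \<in> exps_of_degree n t" "a = ?g b" by auto
        have "(\<Sum>j<n. (b(i := b i + 1)) j) + b i = (\<Sum>j<n. b j) + (b i + 1)"
          by (rule sum_upd_nat[OF i])
        then show "a \<in> ?T" using b i by (auto simp: exps_of_degree_def)
      qed
      show "(\<lambda>a. a(i := a i - 1)) ` ?T \<subseteq> exps_of_degree n t"
      proof
        fix b assume "b \<in> (\<lambda>a. a(i := a i - 1)) ` ?T"
        then obtain a where a: "a \<in> ?T" "b = a(i := a i - 1)" by auto
        have "(\<Sum>j<n. (a(i := a i - 1)) j) + a i = (\<Sum>j<n. a j) + (a i - 1)"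
          by (rule sum_upd_nat[OF i])
        then show "b \<in> exps_of_degree n t" using a i by (auto simp: exps_of_degree_def)
      qed
    qed
  qed
  also have "\<dots> = (\<Sum>b\<in>exps_of_degree n t. x i * (c b * (\<Prod>j<n. x j ^ b j)))"
  proof (rule sum.cong[OF refl])
    fix b assume "b \<in> exps_of_degree n t"
    have "(\<Prod>j<n. x j ^ (b(i := b i + 1)) j) * x i ^ b i = (\<Prod>j<n. x j ^ b j) * x i ^ (b i + 1)"
      by (rule prod_upd[OF i])
    then have "(\<Prod>j<n. x j ^ (b(i := b i + 1)) j) = x i * (\<Prod>j<n. x j ^ b j)"
    proof (cases "x i = 0")
      case True
      have "(\<Prod>j<n. x j ^ (b(i := b i + 1)) j) = 0"
        using i True by (intro prod_zero) auto
      then show ?thesis using True by simp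
    next
      case False
      then show ?thesis using \<open>(\<Prod>j<n. x j ^ (b(i := b i + 1)) j) * x i ^ b i = _\<close>
        by (simp add: field_simps)
    qed
    then show "sh i c (?g b) * (\<Prod>j<n. x j ^ ?g b j) = x i * (c b * (\<Prod>j<n. x j ^ b j))"
      by (simp add: sh_def fun_upd_idem)
  qed
  also have "\<dots> = x i * hpoly_eval n t c x"
    by (simp add: hpoly_eval_def sum_distrib_left)
  finally show ?thesis .
qed

lemma eval_add: "hpoly_eval n t (\<lambda>a. f a + g a) x = hpoly_eval n t f x + hpoly_eval n t g x"
  by (simp add: hpoly_eval_def algebra_simps sum.distrib)
lemma eval_scale: "hpoly_eval n t (\<lambda>a. r * f a) x = r * hpoly_eval n t f x"
  by (simp add: hpoly_eval_def algebra_simps sum_distrib_left)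
lemma eval_sum: "hpoly_eval n t (\<lambda>a. \<Sum>k\<in>K. f k a) x = (\<Sum>k\<in>K. hpoly_eval n t (f k) x)"
  by (simp add: hpoly_eval_def sum_distrib_right sum.swap[of _ K])

lemma exps0: "exps_of_degree n 0 = {\<lambda>_. 0}"
proof -
  have "\<And>a. a \<in> exps_of_degree n 0 \<Longrightarrow> a = (\<lambda>_. 0)"
  proof
    fix a i assume a: "a \<in> exps_of_degree n 0"
    show "a i = 0"
    proof (cases "i < n")
      case True
      then show ?thesis using a by (auto simp: exps_of_degree_def)
    next
      case False then show ?thesis using a by (auto simp: exps_of_degree_def)
    qed
  qed
  then show ?thesis by (auto simp: exps_of_degree_def)
qed

lemma eval_one: "hpoly_eval n 0 one x = 1"
  by (simp add: hpoly_eval_def exps0 one_def)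

lemma eval_ml: "hpoly_eval n (Suc t) (ml n y c) x = (\<Sum>i<n. y i * x i) * hpoly_eval n t c x"
  by (simp add: ml_def eval_sum eval_scale eval_sh sum_distrib_right algebra_simps) (simp add: sum_distrib_left ac_simps)

lemma eval_ms: "hpoly_eval n (Suc (Suc t)) (ms n c) x = (\<Sum>i<n. x i ^ 2) * hpoly_eval n t c x"
  by (simp add: ms_def eval_sum eval_sh sum_distrib_right algebra_simps power2_eq_square) (simp add: sum_distrib_left ac_simps)

lemma eval_Aseq: "hpoly_eval n m (Aseq n y m) x = (\<Sum>i<n. y i * x i) ^ m"
  by (induction m) (simp_all add: Aseq_0 Aseq_Suc eval_one eval_ml)


definition P6 :: "nat \<Rightarrow> real \<Rightarrow> real" where
  "P6 n t = (real n + 4) * (real n + 6) * (real n + 8) * t^6 - 15 * (real n + 4) * (real n + 6) * t^4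
            + 45 * (real n + 4) * t^2 - 15"

definition ip :: "nat \<Rightarrow> (nat\<Rightarrow>real) \<Rightarrow> (nat\<Rightarrow>real) \<Rightarrow> real" where
  "ip n x y = (\<Sum>i<n. x i * y i)"

lemma Zc_harmonic:
  assumes "(\<Sum>i<n. y i ^ 2) = 1"
  shows "harmonic_hpoly n 6 (Zc n y)"
proof -
  have L: "Lap n (Zc n y) b = 0" for b using Lap_Zc[OF assms] by (simp add: fun_eq_iff)
  show ?thesis unfolding harmonic_hpoly_def
  proof (intro impI ballI)
    fix b :: "nat \<Rightarrow> nat"
    have "Lap n (Zc n y) b = (\<Sum>i<n. real ((b i + 2) * (b i + 1)) * Zc n y (b(i := b i + 2)))"
      unfolding Lap_def pd_def by (rule sum.cong) (simp_all add: algebra_simps)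
    then show "(\<Sum>i<n. real ((b i + 2) * (b i + 1)) * Zc n y (b(i := b i + 2))) = 0"
      using L by simp
  qed
qed

lemma Zc_eval:
  assumes "(\<Sum>i<n. x i ^ 2) = 1"
  shows "hpoly_eval n 6 (Zc n y) x = P6 n (ip n x y)"
proof -
  have e: "\<And>c. hpoly_eval n 6 (ms n c) x = hpoly_eval n 4 c x"
          "\<And>c. hpoly_eval n 4 (ms n c) x = hpoly_eval n 2 c x"
          "\<And>c. hpoly_eval n 2 (ms n c) x = hpoly_eval n 0 c x"
    using eval_ms[of n _ _ x] assms by (simp_all add: numeral_eq_Suc)
  have ipc: "(\<Sum>i<n. y i * x i) = ip n x y" by (simp add: ip_def mult.commute)
  show ?thesis
    by (simp only: Zc_def eval_add eval_scale e eval_Aseq ipc eval_one) (simp add: P6_def algebra_simps)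
qed

lemma design_sum_P6:
  assumes d: "design_harmonic_index n 6 Y"
  shows "(\<Sum>y\<in>Y. \<Sum>x\<in>Y. P6 n (ip n x y)) = 0"
proof -
  have fin: "finite Y" and sub: "Y \<subseteq> sphere_pts n"
    and h: "\<And>c. harmonic_hpoly n 6 c \<Longrightarrow> (\<Sum>x\<in>Y. hpoly_eval n 6 c x) = 0"
    using d by (auto simp: design_harmonic_index_def)
  have "(\<Sum>x\<in>Y. P6 n (ip n x y)) = 0" if y: "y \<in> Y" for y
  proof -
    have yn: "(\<Sum>i<n. y i ^ 2) = 1" using y sub by (auto simp: sphere_pts_def)
    have "(\<Sum>x\<in>Y. P6 n (ip n x y)) = (\<Sum>x\<in>Y. hpoly_eval n 6 (Zc n y) x)"
    proof (rule sum.cong[OF refl])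
      fix x assume "x \<in> Y"
      then have "(\<Sum>i<n. x i ^ 2) = 1" using sub by (auto simp: sphere_pts_def)
      then show "P6 n (ip n x y) = hpoly_eval n 6 (Zc n y) x" by (simp add: Zc_eval)
    qed
    also have "\<dots> = 0" by (rule h[OF Zc_harmonic[OF yn]])
    finally show ?thesis .
  qed
  then show ?thesis by simp
qed


lemma not_sq: "(m::nat)^2 < v \<Longrightarrow> v < (Suc m)^2 \<Longrightarrow> v \<noteq> k^2"
proof
  assume a: "m^2 < v" "v < (Suc m)^2" "v = k^2"
  then have "m < k" using power_less_imp_less_base[of m 2 k] by simp
  moreover have "k < Suc m" using a power_less_imp_less_base[of k 2 "Suc m"] by simp
  ultimately show False by simp
qed
lemma sq_cases:
  assumes "3 \<le> n" "n \<le> (88::nat)" "10 * (n + 3) * (n + 6) = k^2"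
  shows "n = 24"
proof -
  have "n = 3 \<or> n = 4 \<or> n = 5 \<or> n = 6 \<or> n = 7 \<or> n = 8 \<or> n = 9 \<or> n = 10 \<or> n = 11 \<or> n = 12 \<or> n = 13 \<or> n = 14 \<or> n = 15 \<or> n = 16 \<or> n = 17 \<or> n = 18 \<or> n = 19 \<or> n = 20 \<or> n = 21 \<or> n = 22 \<or> n = 23 \<or> n = 24 \<or> n = 25 \<or> n = 26 \<or> n = 27 \<or> n = 28 \<or> n = 29 \<or> n = 30 \<or> n = 31 \<or> n = 32 \<or> n = 33 \<or> n = 34 \<or> n = 35 \<or> n = 36 \<or> n = 37 \<or> n = 38 \<or> n = 39 \<or> n = 40 \<or> n = 41 \<or> n = 42 \<or> n = 43 \<or> n = 44 \<or> n = 45 \<or> n = 46 \<or> n = 47 \<or> n = 48 \<or> n = 49 \<or> n = 50 \<or> n = 51 \<or> n = 52 \<or> n = 53 \<or> n = 54 \<or> n = 55 \<or> n = 56 \<or> n = 57 \<or> n = 58 \<or> n = 59 \<or> n = 60 \<or> n = 61 \<or> n = 62 \<or> n = 63 \<or> n = 64 \<or> n = 65 \<or> n = 66 \<or> n = 67 \<or> n = 68 \<or> n = 69 \<or> n = 70 \<or> n = 71 \<or> n = 72 \<or> n = 73 \<or> n = 74 \<or> n = 75 \<or> n = 76 \<or> n = 77 \<or> n = 78 \<or> n = 79 \<or> n = 80 \<or> n = 81 \<or> n = 82 \<or> n = 83 \<or> n = 84 \<or> n = 85 \<or> n = 86 \<or> n = 87 \<or> n = 88" using assms(1,2) by arith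
  then show ?thesis
  proof (elim disjE)
    assume "n = 3" then show ?thesis using assms(3) not_sq[of 23 "540" k] by simp
  next
    assume "n = 4" then show ?thesis using assms(3) not_sq[of 26 "700" k] by simp
  next
    assume "n = 5" then show ?thesis using assms(3) not_sq[of 29 "880" k] by simp
  next
    assume "n = 6" then show ?thesis using assms(3) not_sq[of 32 "1080" k] by simp
  next
    assume "n = 7" then show ?thesis using assms(3) not_sq[of 36 "1300" k] by simp
  next
    assume "n = 8" then show ?thesis using assms(3) not_sq[of 39 "1540" k] by simp
  next
    assume "n = 9" then show ?thesis using assms(3) not_sq[of 42 "1800" k] by simp
  next
    assume "n = 10" then show ?thesis using assms(3) not_sq[of 45 "2080" k] by simp
  next
    assume "n = 11" then show ?thesis using assms(3) not_sq[of 48 "2380" k] by simp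
  next
    assume "n = 12" then show ?thesis using assms(3) not_sq[of 51 "2700" k] by simp
  next
    assume "n = 13" then show ?thesis using assms(3) not_sq[of 55 "3040" k] by simp
  next
    assume "n = 14" then show ?thesis using assms(3) not_sq[of 58 "3400" k] by simp
  next
    assume "n = 15" then show ?thesis using assms(3) not_sq[of 61 "3780" k] by simp
  next
    assume "n = 16" then show ?thesis using assms(3) not_sq[of 64 "4180" k] by simp
  next
    assume "n = 17" then show ?thesis using assms(3) not_sq[of 67 "4600" k] by simp
  next
    assume "n = 18" then show ?thesis using assms(3) not_sq[of 70 "5040" k] by simp
  next
    assume "n = 19" then show ?thesis using assms(3) not_sq[of 74 "5500" k] by simp
  next
    assume "n = 20" then show ?thesis using assms(3) not_sq[of 77 "5980" k] by simp
  next
    assume "n = 21" then show ?thesis using assms(3) not_sq[of 80 "6480" k] by simp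
  next
    assume "n = 22" then show ?thesis using assms(3) not_sq[of 83 "7000" k] by simp
  next
    assume "n = 23" then show ?thesis using assms(3) not_sq[of 86 "7540" k] by simp
  next
    assume "n = 24" then show ?thesis .
  next
    assume "n = 25" then show ?thesis using assms(3) not_sq[of 93 "8680" k] by simp
  next
    assume "n = 26" then show ?thesis using assms(3) not_sq[of 96 "9280" k] by simp
  next
    assume "n = 27" then show ?thesis using assms(3) not_sq[of 99 "9900" k] by simp
  next
    assume "n = 28" then show ?thesis using assms(3) not_sq[of 102 "10540" k] by simp
  next
    assume "n = 29" then show ?thesis using assms(3) not_sq[of 105 "11200" k] by simp
  next
    assume "n = 30" then show ?thesis using assms(3) not_sq[of 108 "11880" k] by simp
  next
    assume "n = 31" then show ?thesis using assms(3) not_sq[of 112 "12580" k] by simp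
  next
    assume "n = 32" then show ?thesis using assms(3) not_sq[of 115 "13300" k] by simp
  next
    assume "n = 33" then show ?thesis using assms(3) not_sq[of 118 "14040" k] by simp
  next
    assume "n = 34" then show ?thesis using assms(3) not_sq[of 121 "14800" k] by simp
  next
    assume "n = 35" then show ?thesis using assms(3) not_sq[of 124 "15580" k] by simp
  next
    assume "n = 36" then show ?thesis using assms(3) not_sq[of 127 "16380" k] by simp
  next
    assume "n = 37" then show ?thesis using assms(3) not_sq[of 131 "17200" k] by simp
  next
    assume "n = 38" then show ?thesis using assms(3) not_sq[of 134 "18040" k] by simp
  next
    assume "n = 39" then show ?thesis using assms(3) not_sq[of 137 "18900" k] by simp
  next
    assume "n = 40" then show ?thesis using assms(3) not_sq[of 140 "19780" k] by simp
  next
    assume "n = 41" then show ?thesis using assms(3) not_sq[of 143 "20680" k] by simp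
  next
    assume "n = 42" then show ?thesis using assms(3) not_sq[of 146 "21600" k] by simp
  next
    assume "n = 43" then show ?thesis using assms(3) not_sq[of 150 "22540" k] by simp
  next
    assume "n = 44" then show ?thesis using assms(3) not_sq[of 153 "23500" k] by simp
  next
    assume "n = 45" then show ?thesis using assms(3) not_sq[of 156 "24480" k] by simp
  next
    assume "n = 46" then show ?thesis using assms(3) not_sq[of 159 "25480" k] by simp
  next
    assume "n = 47" then show ?thesis using assms(3) not_sq[of 162 "26500" k] by simp
  next
    assume "n = 48" then show ?thesis using assms(3) not_sq[of 165 "27540" k] by simp
  next
    assume "n = 49" then show ?thesis using assms(3) not_sq[of 169 "28600" k] by simp
  next
    assume "n = 50" then show ?thesis using assms(3) not_sq[of 172 "29680" k] by simp
  next
    assume "n = 51" then show ?thesis using assms(3) not_sq[of 175 "30780" k] by simp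
  next
    assume "n = 52" then show ?thesis using assms(3) not_sq[of 178 "31900" k] by simp
  next
    assume "n = 53" then show ?thesis using assms(3) not_sq[of 181 "33040" k] by simp
  next
    assume "n = 54" then show ?thesis using assms(3) not_sq[of 184 "34200" k] by simp
  next
    assume "n = 55" then show ?thesis using assms(3) not_sq[of 188 "35380" k] by simp
  next
    assume "n = 56" then show ?thesis using assms(3) not_sq[of 191 "36580" k] by simp
  next
    assume "n = 57" then show ?thesis using assms(3) not_sq[of 194 "37800" k] by simp
  next
    assume "n = 58" then show ?thesis using assms(3) not_sq[of 197 "39040" k] by simp
  next
    assume "n = 59" then show ?thesis using assms(3) not_sq[of 200 "40300" k] by simp
  next
    assume "n = 60" then show ?thesis using assms(3) not_sq[of 203 "41580" k] by simp
  next
    assume "n = 61" then show ?thesis using assms(3) not_sq[of 207 "42880" k] by simp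
  next
    assume "n = 62" then show ?thesis using assms(3) not_sq[of 210 "44200" k] by simp
  next
    assume "n = 63" then show ?thesis using assms(3) not_sq[of 213 "45540" k] by simp
  next
    assume "n = 64" then show ?thesis using assms(3) not_sq[of 216 "46900" k] by simp
  next
    assume "n = 65" then show ?thesis using assms(3) not_sq[of 219 "48280" k] by simp
  next
    assume "n = 66" then show ?thesis using assms(3) not_sq[of 222 "49680" k] by simp
  next
    assume "n = 67" then show ?thesis using assms(3) not_sq[of 226 "51100" k] by simp
  next
    assume "n = 68" then show ?thesis using assms(3) not_sq[of 229 "52540" k] by simp
  next
    assume "n = 69" then show ?thesis using assms(3) not_sq[of 232 "54000" k] by simp
  next
    assume "n = 70" then show ?thesis using assms(3) not_sq[of 235 "55480" k] by simp
  next
    assume "n = 71" then show ?thesis using assms(3) not_sq[of 238 "56980" k] by simp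
  next
    assume "n = 72" then show ?thesis using assms(3) not_sq[of 241 "58500" k] by simp
  next
    assume "n = 73" then show ?thesis using assms(3) not_sq[of 245 "60040" k] by simp
  next
    assume "n = 74" then show ?thesis using assms(3) not_sq[of 248 "61600" k] by simp
  next
    assume "n = 75" then show ?thesis using assms(3) not_sq[of 251 "63180" k] by simp
  next
    assume "n = 76" then show ?thesis using assms(3) not_sq[of 254 "64780" k] by simp
  next
    assume "n = 77" then show ?thesis using assms(3) not_sq[of 257 "66400" k] by simp
  next
    assume "n = 78" then show ?thesis using assms(3) not_sq[of 260 "68040" k] by simp
  next
    assume "n = 79" then show ?thesis using assms(3) not_sq[of 264 "69700" k] by simp
  next
    assume "n = 80" then show ?thesis using assms(3) not_sq[of 267 "71380" k] by simp
  next
    assume "n = 81" then show ?thesis using assms(3) not_sq[of 270 "73080" k] by simp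
  next
    assume "n = 82" then show ?thesis using assms(3) not_sq[of 273 "74800" k] by simp
  next
    assume "n = 83" then show ?thesis using assms(3) not_sq[of 276 "76540" k] by simp
  next
    assume "n = 84" then show ?thesis using assms(3) not_sq[of 279 "78300" k] by simp
  next
    assume "n = 85" then show ?thesis using assms(3) not_sq[of 282 "80080" k] by simp
  next
    assume "n = 86" then show ?thesis using assms(3) not_sq[of 286 "81880" k] by simp
  next
    assume "n = 87" then show ?thesis using assms(3) not_sq[of 289 "83700" k] by simp
  next
    assume "n = 88" then show ?thesis using assms(3) not_sq[of 292 "85540" k] by simp
  qed
qed



definition gg :: "nat \<Rightarrow> real \<Rightarrow> real" where
  "gg n u = (real n + 4) * (real n + 6) * (real n + 8) * u^3 - 15 * (real n + 4) * (real n + 6) * u^2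
            + 45 * (real n + 4) * u - 15"
definition wn :: "nat \<Rightarrow> real" where "wn n = sqrt (10 * (real n + 3) * (real n + 6))"
definition us :: "nat \<Rightarrow> real" where "us n = (5 * (real n + 6) + wn n) / ((real n + 6) * (real n + 8))"

lemma P6_gg: "P6 n t = gg n (t^2)"
  by (simp add: P6_def gg_def power_mult[symmetric])

lemma wn_sq: "(wn n)^2 = 10 * (real n + 3) * (real n + 6)"
  by (simp add: wn_def)
lemma wn_nonneg: "wn n \<ge> 0" by (simp add: wn_def)

lemma us_mult: "us n * ((real n + 6) * (real n + 8)) = 5 * (real n + 6) + wn n"
  by (simp add: us_def)

lemma CR: "(real n + 6) * (real n + 8) * (us n)^2 - 10 * (real n + 6) * us n + 15 = 0"
proof -
  define a where "a = real n + 6"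
  define u where "u = us n"
  define w where "w = wn n"
  have a0: "a > 0" by (simp add: a_def)
  have um: "u * (a * (a+2)) = 5 * a + w" using us_mult[of n] by (simp add: a_def u_def w_def algebra_simps)
  have w2: "w^2 = 10 * a * (a - 3)" using wn_sq[of n] by (simp add: a_def w_def algebra_simps)
  have "(a * (a+2)) * (a * (a+2) * u^2 - 10 * a * u + 15) = (u * (a*(a+2)))^2 - 10 * a * (u * (a * (a+2))) + 15 * a * (a+2)"
    by (simp add: algebra_simps power2_eq_square)
  also have "\<dots> = 0" unfolding um using w2 by (simp add: algebra_simps power2_eq_square)
  finally have "a * (a+2) * u^2 - 10 * a * u + 15 = 0" using a0 by simp
  then show ?thesis by (simp add: a_def u_def algebra_simps)
qed

lemma gg_factor: "gg n u - gg n (us n) = (real n + 4) * (real n + 6) * (u - us n)^2 * ((real n + 8) * u - 15 + 2 * (real n + 8) * us n)"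
  using CR[of n] unfolding gg_def by algebra

lemma gg_us: "gg n (us n) = (real n + 4) * (75 - 20 * (real n + 3) * us n) / (real n + 8) - 15"
proof -
  have "(real n + 8) * gg n (us n) = (real n + 4) * (75 - 20 * (real n + 3) * us n) - 15 * (real n + 8)"
    using CR[of n] unfolding gg_def by algebra
  then show ?thesis by (simp add: field_simps)
qed


lemma us_bounds:
  assumes n3: "n \<ge> 3"
  shows "2 * (real n + 8) * us n > 15" "us n > 0" "us n < 1"
proof -
  define a where "a = real n + 6"
  define w where "w = wn n"
  have a9: "a \<ge> 9" using n3 by (simp add: a_def)
  have w2: "w^2 = 10 * a * (a - 3)" using wn_sq[of n] by (simp add: a_def w_def algebra_simps)
  have w0: "w \<ge> 0" by (simp add: w_def wn_nonneg)
  have uform: "us n = (5 * a + w) / (a * (a + 2))" by (simp add: us_def a_def w_def algebra_simps)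
  have pos: "a * (a + 2) > 0" using a9 by simp
  have "2 * w > 5 * a"
  proof -
    have p: "15 * (a * (a - 8)) > 0" using a9 by (intro mult_pos_pos) auto
    have "(2 * w)^2 - (5 * a)^2 = 15 * (a * (a - 8))"
      using w2 by (simp add: power_mult_distrib power2_eq_square algebra_simps)
    then have "(5 * a)^2 < (2 * w)^2" using p by linarith
    then show ?thesis using w0 power2_less_imp_less[of "5*a" "2*w"] by simp
  qed
  then have h: "2 * (5 * a + w) > 15 * a" by simp
  have a0: "a > 0" using a9 by simp
  have "2 * (a + 2) * us n = 2 * (5 * a + w) / a" using pos a0 unfolding uform by (simp add: field_simps)
  also have "\<dots> > 15" using h a0 by (simp add: less_divide_eq)
  finally show "2 * (real n + 8) * us n > 15" by (simp add: a_def algebra_simps)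
  show "us n > 0" using pos w0 a9 by (simp add: uform)
  have "w < a * a - 3 * a"
  proof -
    have q: "a * (a - 3) \<ge> 54" using a9 mult_mono[of 9 a 6 "a - 3"] by simp
    have p: "(a * (a - 3)) * (a * (a - 3) - 10) > 0" by (rule mult_pos_pos; use q in linarith)
    have "(a * a - 3 * a)^2 - w^2 = (a * (a - 3)) * (a * (a - 3) - 10)"
      using w2 by (simp add: power2_eq_square algebra_simps)
    then have "w^2 < (a * a - 3 * a)^2" using p by linarith
    moreover have "a * a - 3 * a \<ge> 0" using q a9 by (simp add: algebra_simps right_diff_distrib)
    ultimately show ?thesis using power2_less_imp_less[of w "a * a - 3 * a"] by simp
  qed
  then have "5 * a + w < a * (a + 2)" by (simp add: algebra_simps)
  then show "us n < 1" using pos unfolding uform by (simp add: divide_less_eq)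
qed

lemma gg_min:
  assumes n3: "n \<ge> 3" and u0: "u \<ge> 0"
  shows "gg n u \<ge> gg n (us n)" "gg n u = gg n (us n) \<Longrightarrow> u = us n"
proof -
  have "(real n + 8) * u \<ge> 0" using u0 by simp
  then have f: "(real n + 8) * u - 15 + 2 * (real n + 8) * us n > 0"
    using us_bounds(1)[OF n3] by linarith
  have c: "(real n + 4) * (real n + 6) > 0" by simp
  show "gg n u \<ge> gg n (us n)"
  proof -
    have "0 \<le> (real n + 4) * (real n + 6) * (u - us n)^2 * ((real n + 8) * u - 15 + 2 * (real n + 8) * us n)"
      using f c by (intro mult_nonneg_nonneg) auto
    then show ?thesis using gg_factor[of n u] by linarith
  qed
  assume "gg n u = gg n (us n)"
  then have "(real n + 4) * (real n + 6) * (u - us n)^2 * ((real n + 8) * u - 15 + 2 * (real n + 8) * us n) = 0"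
    using gg_factor[of n u] by simp
  then show "u = us n" using f c by simp
qed

definition KK :: "nat \<Rightarrow> real" where "KK n = real n * (real n + 2) * (real n + 10) / fact 6"

lemma Q6_P6: "Q6 n t = KK n * P6 n t"
  by (simp add: Q6_def KK_def P6_def algebra_simps)

lemma KK_pos: "n \<ge> 3 \<Longrightarrow> KK n > 0" by (simp add: KK_def)

lemma c6_eq:
  assumes n3: "n \<ge> 3"
  shows "c6 n = - (KK n * gg n (us n))"
proof -
  have "Inf (Q6 n ` {-1..1}) = KK n * gg n (us n)"
  proof (rule cInf_eq_minimum)
    have u: "0 < us n" "us n < 1" using us_bounds[OF n3] by auto
    show "KK n * gg n (us n) \<in> Q6 n ` {-1..1}"
    proof
      show "KK n * gg n (us n) = Q6 n (sqrt (us n))" using u by (simp add: Q6_P6 P6_gg)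
      have "sqrt (us n) \<ge> 0" using u by simp
      moreover have "sqrt (us n) \<le> 1" using u by simp
      ultimately show "sqrt (us n) \<in> {-1..1}" unfolding atLeastAtMost_iff by linarith
    qed
    fix x assume "x \<in> Q6 n ` {-1..1}"
    then obtain t where "x = Q6 n t" by auto
    then show "KK n * gg n (us n) \<le> x"
      using gg_min(1)[OF n3, of "t^2"] KK_pos[OF n3] by (simp add: Q6_P6 P6_gg)
  qed
  then show ?thesis by (simp add: c6_def)
qed

lemma gg_us_neg: assumes "n \<ge> 3" shows "gg n (us n) < 0"
proof -
  have "gg n (us n) \<le> gg n 0" using gg_min(1)[OF assms, of 0] by simp
  moreover have "gg n 0 = -15" by (simp add: gg_def)
  ultimately show ?thesis by simp
qed

lemma b6_eq:
  assumes n3: "n \<ge> 3"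
  shows "b6 n = 1 + gg n 1 / (- gg n (us n))"
  using KK_pos[OF n3] by (simp add: b6_def c6_eq[OF n3] Q6_P6 P6_gg)


lemma poly_pos:
  fixes a :: real assumes a: "a \<ge> 95"
  shows "3*a^5 - 343*a^4 + 6035*a^3 - 41753*a^2 + 127282*a - 141960 > 0"
proof -
  define t where "t = a - 95"
  have t: "t \<ge> 0" using a by (simp add: t_def)
  have "3*a^5 - 343*a^4 + 6035*a^3 - 41753*a^2 + 127282*a - 141960
      = 3*t^5 + 1082*t^4 + 146445*t^3 + 8826022*t^2 + 201032712*t + 85250880"
    unfolding t_def by algebra
  also have "\<dots> > 0"
  proof -
    have "3*t^5 \<ge> 0" "1082*t^4 \<ge> 0" "146445*t^3 \<ge> 0" "8826022*t^2 \<ge> 0" "201032712*t \<ge> 0"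
      using t by simp_all
    then show ?thesis by linarith
  qed
  finally show ?thesis .
qed

lemma big_n:
  assumes n89: "n \<ge> 89"
  shows "b6 n > real n * real n"
proof -
  have n3: "n \<ge> 3" using n89 by simp
  define a where "a = real n + 6"
  define w where "w = wn n"
  define u where "u = us n"
  have a95: "a \<ge> 95" using n89 by (simp add: a_def)
  have w2: "w^2 = 10 * a * (a - 3)" using wn_sq[of n] by (simp add: a_def w_def algebra_simps)
  have w0: "w \<ge> 0" by (simp add: w_def wn_nonneg)
  have w_le: "w \<le> 19 * a / 6"
  proof -
    have "(19 * a / 6)^2 - w^2 = a^2 / 36 + 30 * a" using w2 by (simp add: power2_eq_square algebra_simps)
    moreover have "a^2 / 36 + 30 * a \<ge> 0" using a95 by simp
    ultimately have "w^2 \<le> (19 * a / 6)^2" by linarith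
    then show ?thesis using a95 power2_le_imp_le[of w "19 * a / 6"] by simp
  qed
  have pos: "a * (a + 2) > 0" using a95 by simp
  have uform: "u = (5 * a + w) / (a * (a + 2))" by (simp add: u_def us_def a_def w_def algebra_simps)
  have u_le: "u \<le> (49/6) / (a + 2)"
  proof -
    have "u \<le> (5 * a + 19 * a / 6) / (a * (a + 2))"
      unfolding uform by (rule divide_right_mono) (use w_le pos in auto)
    also have "\<dots> = (49/6) / (a + 2)"
    proof -
      have "a \<noteq> 0" "a + 2 \<noteq> 0" using a95 by auto
      have "5 * a + 19 * a / 6 = a * (49/6)" by simp
      then show ?thesis using nonzero_mult_divide_mult_cancel_left[OF \<open>a \<noteq> 0\<close>, of "49/6" "a+2"] by simp
    qed
    finally show ?thesis .
  qed
  have V: "- gg n u = 15 - (a - 2) * (75 - 20 * (a - 3) * u) / (a + 2)"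
    using gg_us[of n] by (simp add: u_def a_def algebra_simps)
  define UB where "UB = 15 - (a - 2) * (75 - 20 * (a - 3) * ((49/6) / (a + 2))) / (a + 2)"
  have V_le: "- gg n u \<le> UB"
  proof -
    have "(a - 2) * (75 - 20 * (a - 3) * u) \<ge> (a - 2) * (75 - 20 * (a - 3) * ((49/6) / (a + 2)))"
    proof (rule mult_left_mono)
      have "(a - 3) * u \<le> (a - 3) * ((49/6) / (a + 2))" using u_le a95 by (intro mult_left_mono) auto
      then show "75 - 20 * (a - 3) * ((49/6) / (a + 2)) \<le> 75 - 20 * (a - 3) * u" by (simp only: mult.assoc)
    qed (use a95 in simp)
    then have "(a - 2) * (75 - 20 * (a - 3) * ((49/6) / (a + 2))) / (a + 2) \<le> (a - 2) * (75 - 20 * (a - 3) * u) / (a + 2)"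
      using a95 by (intro divide_right_mono) auto
    then show ?thesis unfolding V UB_def by linarith
  qed
  have g1: "gg n 1 = (a - 2) * (a^2 - 13 * a + 45) - 15"
    by (simp add: gg_def a_def algebra_simps power2_eq_square)
  have nn: "real n * real n - 1 = (a - 6)^2 - 1" by (simp add: a_def power2_eq_square)
  have key: "gg n 1 > ((a - 6)^2 - 1) * UB"
  proof -
    have e: "(a + 2)^2 * (gg n 1 - ((a - 6)^2 - 1) * UB) = (3*a^5 - 343*a^4 + 6035*a^3 - 41753*a^2 + 127282*a - 141960) / 3"
    proof -
      define q where "q = (49/6) / (a + 2)"
      define r where "r = 1 / (a + 2)"
      have ne: "a + 2 \<noteq> 0" using a95 by simp
      have hq: "(a + 2) * q = 49/6" unfolding q_def using ne by (metis nonzero_mult_div_cancel_left times_divide_eq_right)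
      have hr: "(a + 2) * r = 1" using ne by (simp add: r_def)
      have U: "UB = 15 - (a - 2) * (75 - 20 * (a - 3) * q) * r"
        by (simp add: UB_def q_def r_def)
      show ?thesis unfolding g1 U using hq hr by algebra
    qed
    have "(a + 2)^2 * (gg n 1 - ((a - 6)^2 - 1) * UB) > 0" unfolding e using poly_pos[OF a95] by simp
    moreover have "(a + 2)^2 > 0" using a95 by simp
    ultimately have "gg n 1 - ((a - 6)^2 - 1) * UB > 0" by (simp add: zero_less_mult_iff)
    then show ?thesis by simp
  qed
  have gneg: "- gg n u > 0" using gg_us_neg[OF n3] by (simp add: u_def)
  have "(real n * real n - 1) * (- gg n u) \<le> (real n * real n - 1) * UB"
  proof (rule mult_left_mono[OF V_le])
    have "real n \<ge> 1" using n89 by simp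
    then have "real n * real n \<ge> 1 * 1" by (intro mult_mono) auto
    then show "0 \<le> real n * real n - 1" by simp
  qed
  also have "\<dots> < gg n 1" using key nn by simp
  finally have F: "(real n * real n - 1) * (- gg n u) < gg n 1" .
  have "real n * real n - 1 < gg n 1 / (- gg n u)"
    by (simp only: pos_less_divide_eq[OF gneg]) (rule F)
  then show ?thesis using b6_eq[OF n3] by (simp add: u_def)
qed


lemma sqrt_rat_square:
  assumes "sqrt (real m) \<in> \<rat>"
  shows "\<exists>k. m = k^2"
proof -
  obtain p q :: nat where q: "q \<noteq> 0" and pq: "\<bar>sqrt (real m)\<bar> = real p / real q" and cop: "coprime p q"
    using Rats_abs_nat_div_natE[OF assms] by metis
  have "sqrt (real m) = real p / real q" using pq by simp
  then have "real m = (real p / real q)^2" by (metis of_nat_0_le_iff real_sqrt_pow2)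
  then have "real m * (real q)^2 = (real p)^2" using q by (simp add: field_simps)
  then have mq: "m * q^2 = p^2" by (metis of_nat_eq_iff of_nat_mult of_nat_power)
  have "q^2 dvd p^2" using mq by (metis dvd_triv_right)
  moreover have "coprime (p^2) (q^2)" using cop by simp
  ultimately have "is_unit (q^2)" by (meson coprime_common_divisor dvd_refl)
  then have "q = 1" by simp
  then show ?thesis using mq by auto
qed

lemma gg1_rat: "gg n 1 \<in> \<rat>"
  unfolding gg_def by (intro Rats_add Rats_mult Rats_diff Rats_of_nat Rats_power Rats_number_of Rats_1)

lemma rational_square:
  assumes n3: "n \<ge> 3" and b: "b6 n = real N"
  shows "\<exists>k. 10 * (n + 3) * (n + 6) = k^2"
proof -
  define a where "a = real n + 6"
  have a9: "a \<ge> 9" using n3 by (simp add: a_def)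
  have gneg: "gg n (us n) < 0" using gg_us_neg[OF n3] .
  have g1pos: "gg n 1 > 0"
  proof -
    have "gg n 1 = (a - 2) * ((a - 6.5)^2 + 2.75) - 15"
      by (simp add: gg_def a_def algebra_simps power2_eq_square)
    moreover have "(a - 2) * ((a - 6.5)^2 + 2.75) \<ge> 7 * 2.75"
      using a9 by (intro mult_mono) auto
    ultimately show ?thesis by simp
  qed
  have "real N - 1 = gg n 1 / (- gg n (us n))" using b b6_eq[OF n3] by simp
  then have N1: "real N - 1 > 0" using g1pos gneg by (simp add: divide_pos_neg)
  have "- gg n (us n) = gg n 1 / (real N - 1)"
    using \<open>real N - 1 = _\<close> N1 gneg by (simp add: field_simps)
  then have gR: "gg n (us n) \<in> \<rat>" using gg1_rat
    by (metis Rats_divide Rats_diff Rats_minus_iff Rats_of_nat Rats_1)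
  have e1: "(gg n (us n) + 15) * (real n + 8) = (real n + 4) * (75 - 20 * (real n + 3) * us n)"
    using gg_us[of n] by (simp add: field_simps)
  have "20 * (real n + 3) * us n = 75 - (gg n (us n) + 15) * (real n + 8) / (real n + 4)"
  proof -
    have ne: "real n + 4 \<noteq> 0" by simp
    have "(gg n (us n) + 15) * (real n + 8) / (real n + 4) = 75 - 20 * (real n + 3) * us n"
      using e1 ne by (simp add: divide_eq_eq mult.commute)
    then show ?thesis by simp
  qed
  then have "us n = (75 - (gg n (us n) + 15) * (real n + 8) / (real n + 4)) / (20 * (real n + 3))"
    by (simp add: eq_divide_eq mult.commute)
  then have uR: "us n \<in> \<rat>" using gR
    by (metis Rats_divide Rats_diff Rats_mult Rats_add Rats_of_nat Rats_number_of)
  have "wn n = us n * ((real n + 6) * (real n + 8)) - 5 * (real n + 6)"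
    using us_mult[of n] by simp
  then have "wn n \<in> \<rat>" using uR
    by (metis Rats_diff Rats_mult Rats_add Rats_of_nat Rats_number_of)
  moreover have "wn n = sqrt (real (10 * (n + 3) * (n + 6)))" by (simp add: wn_def)
  ultimately show ?thesis using sqrt_rat_square by metis
qed



interpretation fvs: vector_space "(\<lambda>(r::real) (f::'a \<Rightarrow> real) i. r * f i)"
  by unfold_locales (auto simp: fun_eq_iff algebra_simps)

definition emb :: "nat \<Rightarrow> (nat \<Rightarrow> real) \<Rightarrow> (nat \<times> nat \<Rightarrow> real)" where
  "emb n x = (\<lambda>(i,j). if i < n \<and> j < n then x i * x j else 0)"
definition ebas :: "nat \<times> nat \<Rightarrow> nat \<times> nat \<Rightarrow> real" where
  "ebas p = (\<lambda>q. if q = p then 1 else 0)"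
definition inn :: "nat \<Rightarrow> (nat \<times> nat \<Rightarrow> real) \<Rightarrow> (nat \<times> nat \<Rightarrow> real) \<Rightarrow> real" where
  "inn n f g = (\<Sum>p\<in>{..<n}\<times>{..<n}. f p * g p)"

lemma sum_fun_apply: "(\<Sum>k\<in>K. (f k :: 'b \<Rightarrow> real)) q = (\<Sum>k\<in>K. f k q)"
  by (induction K rule: infinite_finite_induct) auto

lemma emb_span: "emb n x \<in> fvs.span (ebas ` ({..<n} \<times> {..<n}))"
proof -
  have e: "emb n x = (\<Sum>p\<in>{..<n}\<times>{..<n}. (\<lambda>i. emb n x p * ebas p i))"
  proof
    fix q :: "nat \<times> nat"
    show "emb n x q = (\<Sum>p\<in>{..<n}\<times>{..<n}. (\<lambda>i. emb n x p * ebas p i)) q"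
      unfolding sum_fun_apply ebas_def
      by (cases q) (auto simp: emb_def if_distrib cong: if_cong)
  qed
  show ?thesis
    by (subst e, intro fvs.span_sum fvs.span_scale[where c = "emb n x _", simplified] fvs.span_base) auto
qed

lemma inn_emb: "inn n (emb n x) (emb n y) = (ip n x y)^2"
proof -
  have "inn n (emb n x) (emb n y) = (\<Sum>(i,j)\<in>{..<n}\<times>{..<n}. (x i * y i) * (x j * y j))"
    unfolding inn_def
    by (intro sum.cong refl) (auto simp: emb_def)
  also have "\<dots> = (\<Sum>i<n. \<Sum>j<n. (x i * y i) * (x j * y j))"
    by (rule sum.cartesian_product[symmetric])
  also have "\<dots> = (ip n x y)^2"
    by (simp add: ip_def power2_eq_square sum_product)
  finally show ?thesis .
qed

lemma gerzon:
  assumes fin: "finite S"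
    and nrm: "\<And>x. x \<in> S \<Longrightarrow> ip n x x = 1"
    and off: "\<And>x y. x \<in> S \<Longrightarrow> y \<in> S \<Longrightarrow> x \<noteq> y \<Longrightarrow> (ip n x y)^2 = \<beta>"
    and b0: "0 \<le> \<beta>" and b1: "\<beta> < 1"
  shows "card S \<le> n * n"
proof -
  have inj: "inj_on (emb n) S"
  proof (rule inj_onI, rule ccontr)
    fix x y assume xy: "x \<in> S" "y \<in> S" "emb n x = emb n y" "x \<noteq> y"
    have "(ip n x y)^2 = inn n (emb n x) (emb n y)" by (simp add: inn_emb)
    also have "\<dots> = inn n (emb n x) (emb n x)" using xy by simp
    also have "\<dots> = 1" using nrm[OF xy(1)] by (simp add: inn_emb)
    finally show False using off[OF xy(1,2,4)] b1 by simp
  qed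
  have indep: "fvs.independent (emb n ` S)"
  proof
    assume "fvs.dependent (emb n ` S)"
    then obtain c v where v: "v \<in> emb n ` S" and cv: "c v \<noteq> 0"
      and sum0: "(\<Sum>v\<in>emb n ` S. (\<lambda>i. c v * v i)) = 0"
      using fvs.dependent_finite[of "emb n ` S"] fin by auto
    define d where "d x = c (emb n x)" for x
    have s0: "(\<Sum>x\<in>S. (\<lambda>i. d x * emb n x i)) = 0"
      using sum0 by (simp add: sum.reindex[OF inj] d_def)
    have eq: "d y * (1 - \<beta>) + \<beta> * (\<Sum>x\<in>S. d x) = 0" if y: "y \<in> S" for y
    proof -
      have "0 = inn n (\<Sum>x\<in>S. (\<lambda>i. d x * emb n x i)) (emb n y)"
        unfolding s0 by (simp add: inn_def)
      also have "\<dots> = (\<Sum>x\<in>S. d x * inn n (emb n x) (emb n y))"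
        unfolding inn_def sum_fun_apply
        by (simp add: sum_distrib_left sum_distrib_right sum.swap[of _ S] mult.assoc)
      also have "\<dots> = (\<Sum>x\<in>S. d x * (if x = y then 1 else \<beta>))"
        by (intro sum.cong refl) (auto simp: inn_emb nrm off y)
      also have "\<dots> = d y * (1 - \<beta>) + \<beta> * (\<Sum>x\<in>S. d x)"
      proof -
        have "(\<Sum>x\<in>S. d x * (if x = y then 1 else \<beta>)) = (\<Sum>x\<in>S. \<beta> * d x + (if x = y then (1 - \<beta>) * d x else 0))"
          by (intro sum.cong refl) (auto simp: algebra_simps)
        also have "\<dots> = \<beta> * (\<Sum>x\<in>S. d x) + (1 - \<beta>) * d y"
          using fin y by (simp add: sum.distrib sum_distrib_left)
        finally show ?thesis by (simp add: algebra_simps)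
      qed
      finally show ?thesis by simp
    qed
    define C where "C = (\<Sum>x\<in>S. d x)"
    have "(\<Sum>y\<in>S. d y * (1 - \<beta>) + \<beta> * C) = 0"
      using eq by (simp add: C_def)
    then have "C * (1 - \<beta>) + real (card S) * \<beta> * C = 0"
      by (simp add: sum.distrib C_def sum_distrib_right)
    then have "C * (1 - \<beta> + real (card S) * \<beta>) = 0" by (simp add: algebra_simps)
    moreover have "1 - \<beta> + real (card S) * \<beta> > 0" using b0 b1 by (simp add: add_pos_nonneg)
    ultimately have C0: "C = 0" by simp
    obtain x where x: "x \<in> S" "v = emb n x" using v by auto
    have "d x * (1 - \<beta>) = 0" using eq[OF x(1)] C0 by (simp add: C_def)
    then have "d x = 0" using b1 by simp
    then show False using x cv by (simp add: d_def)
  qed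
  have "card (emb n ` S) \<le> card (ebas ` ({..<n} \<times> {..<n}))"
  proof -
    have "emb n ` S \<subseteq> fvs.span (ebas ` ({..<n} \<times> {..<n}))" using emb_span by auto
    then show ?thesis using fvs.independent_span_bound[OF _ indep] by auto
  qed
  also have "\<dots> \<le> card ({..<n} \<times> {..<n})" by (rule card_image_le) simp
  also have "\<dots> = n * n" by (simp add: card_cartesian_product)
  finally show ?thesis using card_image[OF inj] by simp
qed



lemma det_of_int: "of_int (det (M :: int^'n^'n)) = det (\<chi> i j. (of_int (M$i$j) :: 'a::comm_ring_1))"
  unfolding det_def by (simp add: of_int_sum of_int_prod)

definition Bm :: "bit^26^26" where "Bm = (\<chi> i j. if i = j then 0 else 1)"

lemma Bm_sq: "Bm ** Bm = mat 1"
proof -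
  have "(Bm ** Bm)$i$j = (mat 1 :: bit^26^26)$i$j" for i j
  proof -
    have "(Bm ** Bm)$i$j = (\<Sum>k\<in>UNIV. Bm$i$k * Bm$k$j)"
      by (simp add: matrix_matrix_mult_def)
    also have "\<dots> = (\<Sum>k\<in>UNIV. if k \<noteq> i \<and> k \<noteq> j then 1 else 0)"
      by (rule sum.cong) (auto simp: Bm_def)
    also have "\<dots> = (\<Sum>k\<in>{k. k \<noteq> i \<and> k \<noteq> j}. 1)"
      using sum.inter_filter[of UNIV "\<lambda>_. 1::bit" "\<lambda>k. k \<noteq> i \<and> k \<noteq> j"] by simp
    also have "\<dots> = of_nat (card (UNIV - {i, j}))"
    proof -
      have "{k. k \<noteq> i \<and> k \<noteq> j} = UNIV - {i, j}" by auto
      then show ?thesis by simp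
    qed
    also have "card (UNIV - {i, j}) = (if i = j then 25 else 24)"
      by (subst card_Diff_subset) auto
    finally show ?thesis by (cases "i = j") (simp_all add: mat_def)
  qed
  then show ?thesis by (simp add: vec_eq_iff)
qed


lemma det_Bm: "det Bm \<noteq> 0"
proof
  assume "det Bm = 0"
  then have "det (Bm ** Bm) = 0" by (simp add: det_mul)
  then show False by (simp add: Bm_sq)
qed

lemma card_le_dim:
  assumes fin: "finite S" and supp: "\<And>x i. x \<in> S \<Longrightarrow> n \<le> i \<Longrightarrow> x i = 0"
    and ind: "fvs.independent S"
  shows "card S \<le> n"
proof -
  define e where "e i = (\<lambda>j::nat. if j = i then (1::real) else 0)" for i
  have "x \<in> fvs.span (e ` {..<n})" if x: "x \<in> S" for x
  proof -
    have ex: "x = (\<Sum>i<n. (\<lambda>j. x i * e i j))"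
    proof
      fix j show "x j = (\<Sum>i<n. (\<lambda>j. x i * e i j)) j"
      proof -
        have "(\<Sum>i<n. (\<lambda>j. x i * e i j)) j = (\<Sum>i<n. if j = i then x i else 0)"
          unfolding sum_fun_apply e_def by (rule sum.cong) auto
        then show ?thesis using supp[OF x, of j] by (cases "j < n") auto
      qed
    qed
    show ?thesis
      by (subst ex, intro fvs.span_sum fvs.span_scale[where c = "x _", simplified] fvs.span_base) auto
  qed
  then have "S \<subseteq> fvs.span (e ` {..<n})" by auto
  then have "card S \<le> card (e ` {..<n})" using fvs.independent_span_bound[OF _ ind] by auto
  also have "\<dots> \<le> n" using card_image_le[of "{..<n}" e] by simp
  finally show ?thesis .
qed

lemma no_24_config:
  fixes Y :: "(nat \<Rightarrow> real) set"
  assumes fin: "finite Y" and cY: "26 \<le> card Y"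
    and supp: "\<And>x i. x \<in> Y \<Longrightarrow> 24 \<le> i \<Longrightarrow> x i = 0"
    and nrm: "\<And>x. x \<in> Y \<Longrightarrow> ip 24 x x = 1"
    and off: "\<And>x y. x \<in> Y \<Longrightarrow> y \<in> Y \<Longrightarrow> x \<noteq> y \<Longrightarrow> (ip 24 x y)^2 = 1/4"
  shows False
proof -
  obtain S where S: "S \<subseteq> Y" "card S = 26" "finite S"
    using obtain_subset_with_card_n[OF cY] by metis
  have "fvs.dependent S"
  proof (rule ccontr)
    assume "\<not> fvs.dependent S"
    then have "card S \<le> 24" using card_le_dim[OF S(3)] supp S(1) by blast
    then show False using S by simp
  qed
  then obtain u v0 where v0: "v0 \<in> S" "u v0 \<noteq> 0" and su: "(\<Sum>v\<in>S. (\<lambda>i. u v * v i)) = 0"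
    using fvs.dependent_finite[OF S(3)] by auto
  have lin: "(\<Sum>v\<in>S. u v * ip 24 w v) = 0" for w
  proof -
    have "(\<Sum>v\<in>S. u v * ip 24 w v) = (\<Sum>k<24. w k * (\<Sum>v\<in>S. (\<lambda>i. u v * v i)) k)"
      unfolding ip_def sum_fun_apply
      by (simp add: sum_distrib_left sum.swap[of _ S] algebra_simps)
    then show ?thesis unfolding su by simp
  qed
  have "card (UNIV :: 26 set) = card S" using S by simp
  then obtain f where f: "bij_betw f (UNIV :: 26 set) S"
    using finite_same_card_bij[of "UNIV :: 26 set" S] S(3) by auto
  have finj: "f i \<noteq> f j" if "i \<noteq> j" for i j
    using f that by (auto simp: bij_betw_def inj_on_def)
  have fS: "f i \<in> S" for i using f by (auto simp: bij_betw_def)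
  define M :: "int^26^26" where
    "M = (\<chi> i j. if i = j then 2 else if ip 24 (f i) (f j) > 0 then 1 else -1)"
  define A :: "real^26^26" where "A = (\<chi> i j. of_int (M$i$j))"
  have Aent: "A$i$j = 2 * ip 24 (f i) (f j)" for i j
  proof (cases "i = j")
    case True
    then show ?thesis using nrm[of "f i"] fS S(1) by (auto simp: A_def M_def)
  next
    case False
    have sq: "(ip 24 (f i) (f j))^2 = 1/4" using off[of "f i" "f j"] fS S(1) finj[OF False] by auto
    have "ip 24 (f i) (f j) = 1/2 \<or> ip 24 (f i) (f j) = -1/2"
    proof -
      have "(ip 24 (f i) (f j) - 1/2) * (ip 24 (f i) (f j) + 1/2) = 0"
        using sq by (simp add: algebra_simps power2_eq_square)
      then show ?thesis by auto
    qed
    then show ?thesis using False by (auto simp: A_def M_def)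
  qed
  define lam :: "real^26" where "lam = (\<chi> j. u (f j))"
  have Alam: "A *v lam = 0"
  proof -
    have "(A *v lam)$i = 0" for i
    proof -
      have "(A *v lam)$i = (\<Sum>j\<in>UNIV. 2 * ip 24 (f i) (f j) * u (f j))"
        by (simp add: matrix_vector_mult_def Aent lam_def)
      also have "\<dots> = 2 * (\<Sum>v\<in>S. u v * ip 24 (f i) v)"
        by (simp add: sum_distrib_left sum.reindex_bij_betw[OF f, of "\<lambda>v. u v * ip 24 (f i) v", symmetric] algebra_simps)
      also have "\<dots> = 0" using lin by simp
      finally show ?thesis .
    qed
    then show ?thesis by (simp add: vec_eq_iff)
  qed
  have lam0: "lam \<noteq> 0"
  proof -
    obtain j where "f j = v0" using f v0 by (auto simp: bij_betw_def)
    then have "lam$j \<noteq> 0" using v0 by (simp add: lam_def)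
    then show ?thesis by auto
  qed
  have "det A = 0"
  proof (rule ccontr)
    assume "det A \<noteq> 0"
    then have "invertible A" by (simp add: invertible_det_nz)
    then obtain B where B: "B ** A = mat 1" by (auto simp: invertible_left_inverse)
    have "lam = (B ** A) *v lam" by (simp add: B)
    also have "\<dots> = B *v (A *v lam)" by (simp add: matrix_vector_mul_assoc)
    also have "\<dots> = 0" by (simp add: Alam)
    finally show False using lam0 by simp
  qed
  then have "(of_int (det M) :: real) = 0" by (simp add: det_of_int A_def)
  then have dM: "det M = 0" by simp
  have "(\<chi> i j. (of_int (M$i$j) :: bit)) = Bm"
    by (simp add: vec_eq_iff M_def Bm_def)
  then have "(of_int (det M) :: bit) = det Bm" by (simp add: det_of_int)
  then show False using dM det_Bm by simp
qed



lemma us24: "us 24 = 1/4"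
proof -
  have "wn 24 = 90"
  proof -
    have "wn 24 = sqrt (90^2)" by (simp add: wn_def)
    then show ?thesis by simp
  qed
  then show ?thesis by (simp add: us_def)
qed

lemma b6_24: "b6 24 = 231"
  by (simp add: b6_eq us24 gg_def power2_eq_square power3_eq_cube)

theorem mainTheorem2:
  fixes n :: nat
  assumes "n \<ge> 3"
  shows "\<not> (\<exists>Y. finite Y \<and> Y \<subseteq> sphere_pts n \<and> design_harmonic_index n 6 Y
              \<and> real (card Y) = b6 n)"
proof
  assume "\<exists>Y. finite Y \<and> Y \<subseteq> sphere_pts n \<and> design_harmonic_index n 6 Y \<and> real (card Y) = b6 n"
  then obtain Y where fin: "finite Y" and sub: "Y \<subseteq> sphere_pts n" and des: "design_harmonic_index n 6 Y"
    and cardY: "real (card Y) = b6 n" by blast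
  have n3: "n \<ge> 3" by (rule assms)
  define N where "N = card Y"
  define m where "m = gg n (us n)"
  have mneg: "m < 0" using gg_us_neg[OF n3] by (simp add: m_def)
  have bN: "real N = 1 + gg n 1 / (- m)" using cardY b6_eq[OF n3] by (simp add: N_def m_def)
  have rel: "(real N - 1) * m = - gg n 1" using bN mneg by (simp add: field_simps)
  have N1: "N \<ge> 1"
  proof (rule ccontr)
    assume "\<not> N \<ge> 1"
    then have "N = 0" by simp
    then have "gg n 1 / (- m) = -1" using bN by simp
    moreover have "gg n 1 / (- m) \<ge> 0"
    proof -
      have "gg n 1 = (real n + 4) * (real n * real n - real n + 3) - 15"
        by (simp add: gg_def algebra_simps)
      moreover have "real n * real n \<ge> real n * 1" using n3 by (intro mult_left_mono) auto
      then have "(real n + 4) * (real n * real n - real n + 3) \<ge> 7 * 3"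
        using n3 by (intro mult_mono) auto
      ultimately have "gg n 1 \<ge> 0" by simp
      then show ?thesis using mneg by (simp add: divide_nonneg_neg)
    qed
    ultimately show False by simp
  qed
  have sph: "\<And>x. x \<in> Y \<Longrightarrow> (\<forall>i\<ge>n. x i = 0) \<and> (\<Sum>i<n. (x i)^2) = 1"
    using sub by (auto simp: sphere_pts_def)
  have ipxx: "\<And>x. x \<in> Y \<Longrightarrow> ip n x x = 1"
    using sph by (simp add: ip_def power2_eq_square)
  have geq: "P6 n (ip n x y) \<ge> m" for x y
    using gg_min(1)[OF n3, of "(ip n x y)^2"] by (simp add: P6_gg m_def)
  define T where "T y = (\<Sum>x\<in>Y - {y}. P6 n (ip n x y) - m)" for y
  have Tnn: "T y \<ge> 0" for y unfolding T_def by (intro sum_nonneg) (simp add: geq)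
  have split: "(\<Sum>x\<in>Y. P6 n (ip n x y)) = gg n 1 + T y + (real N - 1) * m" if y: "y \<in> Y" for y
  proof -
    have "(\<Sum>x\<in>Y. P6 n (ip n x y)) = P6 n (ip n y y) + (\<Sum>x\<in>Y - {y}. P6 n (ip n x y))"
      using fin y by (simp add: sum.remove)
    also have "P6 n (ip n y y) = gg n 1" using ipxx[OF y] by (simp add: P6_gg)
    also have "(\<Sum>x\<in>Y - {y}. P6 n (ip n x y)) = T y + real (card (Y - {y})) * m"
      by (simp add: T_def sum_subtractf)
    also have "real (card (Y - {y})) = real N - 1"
      using fin y N1 by (simp add: N_def of_nat_diff)
    finally show ?thesis by simp
  qed
  have "0 = (\<Sum>y\<in>Y. \<Sum>x\<in>Y. P6 n (ip n x y))" using design_sum_P6[OF des] by simp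
  also have "\<dots> = (\<Sum>y\<in>Y. T y + (gg n 1 + (real N - 1) * m))"
    by (intro sum.cong refl) (simp add: split)
  also have "\<dots> = (\<Sum>y\<in>Y. T y)" using rel by simp
  finally have sumT: "(\<Sum>y\<in>Y. T y) = 0" by simp
  have T0: "T y = 0" if "y \<in> Y" for y
    using sum_nonneg_eq_0_iff[OF fin, of T] Tnn sumT that by auto
  have offd: "(ip n x y)^2 = us n" if xy: "x \<in> Y" "y \<in> Y" "x \<noteq> y" for x y
  proof -
    have "(\<Sum>x\<in>Y - {y}. P6 n (ip n x y) - m) = 0" using T0[OF xy(2)] by (simp add: T_def)
    then have "P6 n (ip n x y) - m = 0"
      using sum_nonneg_eq_0_iff[of "Y - {y}" "\<lambda>x. P6 n (ip n x y) - m"] fin geq xy by auto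
    then have "gg n ((ip n x y)^2) = gg n (us n)" by (simp add: P6_gg m_def)
    then show ?thesis using gg_min(2)[OF n3] by simp
  qed
  show False
  proof (cases "n \<ge> 89")
    case True
    have "card Y \<le> n * n"
      using gerzon[OF fin ipxx offd] us_bounds[OF n3] by auto
    then have "real N \<le> real (n * n)" unfolding N_def by (simp only: of_nat_le_iff)
    then have "real N \<le> real n * real n" by simp
    then show False using big_n[OF True] cardY by (simp add: N_def)
  next
    case False
    obtain k where "10 * (n + 3) * (n + 6) = k^2"
      using rational_square[OF n3, of N] cardY by (auto simp: N_def)
    then have n24: "n = 24" using sq_cases[OF n3] False by simp
    have "real N = 231" using cardY b6_24 n24 by (simp add: N_def)
    then have "N = 231" by simp
    show False
    proof (rule no_24_config[OF fin])
      show "26 \<le> card Y" using \<open>N = 231\<close> by (simp add: N_def)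
      show "\<And>x i. x \<in> Y \<Longrightarrow> 24 \<le> i \<Longrightarrow> x i = 0" using sph n24 by auto
      show "\<And>x. x \<in> Y \<Longrightarrow> ip 24 x x = 1" using ipxx n24 by simp
      show "\<And>x y. x \<in> Y \<Longrightarrow> y \<in> Y \<Longrightarrow> x \<noteq> y \<Longrightarrow> (ip 24 x y)^2 = 1/4"
        using offd n24 us24 by simp
    qed
  qed
qed

end
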